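(* Let $\{w_t\}_{t=0}^T$ be generated by the CLion optimizer (defined in the context) for $T$ iterations, and let $\hat G=\max(G,\sqrt d)$. If $\|w_0\|\le\eta\hat G$ and $\lambda\le\frac{1}{2\eta\hat G T^\alpha}$ with $\alpha>1$, then for all $t$, $$\|w_t\|\le(t+1)\eta\hat G,\qquad \|w_t-w_{t-1}\|\le2\eta\hat G.$$
   Context: CLion optimizer with $\eta>0$, $\beta_1,\beta_2\in(0,1)$, $\lambda>0$, $\nu>0$: initialize $w_0\in\mathbb{R}^d$, $m_0=0$; for $t=1,\dots,T$: draw $\xi_t\sim\mathcal{D}$, $g_t=\nabla f(w_{t-1};\xi_t)$, $c_t=\beta_1m_{t-1}+(1-\beta_1)g_t$; with $S_t=\{j:(c_t)_j\ne0\}$, if $\min_{j\in S_t}|(c_t)_j|\ge\nu$ then $w_t=w_{t-1}-\eta(\mathrm{sign}(c_t)+\lambda w_{t-1})$, else $w_t=w_{t-1}-\eta(c_t+\lambda w_{t-1})$; $m_t=\beta_2m_{t-1}+(1-\beta_2)g_t$. Here $\mathrm{sign}$ is coordinatewise with $\mathrm{sign}(0)=0$. $G$ is the constant of the standing assumption that each $f(\cdot;\xi)$ is $G$-Lipschitz: $|f(w_1;\xi)-f(w_2;\xi)|\le G\|w_1-w_2\|$ for all $w_1,w_2,\xi$ (so $\|\nabla f(w;\xi)\|\le G$). $\|\cdot\|$ is the Euclidean norm. *)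

theory Defs
  imports "HOL-Analysis.Analysis"
begin

definition sign_vec :: "real^'d \<Rightarrow> real^'d" where
  "sign_vec c = (\<chi> j. sgn (c $ j))"

definition clion_dir :: "real \<Rightarrow> real^'d \<Rightarrow> real^'d" where
  "clion_dir \<nu> c = (if (\<forall>j. c $ j \<noteq> 0 \<longrightarrow> \<nu> \<le> \<bar>c $ j\<bar>) then sign_vec c else c)"

text \<open>State (w_t, m_t) of CLion.  gr t w is the stochastic gradient used at
  iteration t, evaluated at w, i.e. gr t w = grad f(w; xi_t).\<close>
primrec clion_state ::
  "real \<Rightarrow> real \<Rightarrow> real \<Rightarrow> real \<Rightarrow> real \<Rightarrow> (nat \<Rightarrow> real^'d \<Rightarrow> real^'d) \<Rightarrow> real^'d
   \<Rightarrow> nat \<Rightarrow> (real^'d) \<times> (real^'d)" where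
  "clion_state \<eta> \<beta>1 \<beta>2 lam \<nu> gr w0 0 = (w0, 0)"
| "clion_state \<eta> \<beta>1 \<beta>2 lam \<nu> gr w0 (Suc t) =
     (let (w, m) = clion_state \<eta> \<beta>1 \<beta>2 lam \<nu> gr w0 t;
          g = gr (Suc t) w;
          c = \<beta>1 *\<^sub>R m + (1 - \<beta>1) *\<^sub>R g
      in (w - \<eta> *\<^sub>R (clion_dir \<nu> c + lam *\<^sub>R w),
          \<beta>2 *\<^sub>R m + (1 - \<beta>2) *\<^sub>R g))"

definition clion_w ::
  "real \<Rightarrow> real \<Rightarrow> real \<Rightarrow> real \<Rightarrow> real \<Rightarrow> (nat \<Rightarrow> real^'d \<Rightarrow> real^'d) \<Rightarrow> real^'d
   \<Rightarrow> nat \<Rightarrow> real^'d" where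
  "clion_w \<eta> \<beta>1 \<beta>2 lam \<nu> gr w0 t = fst (clion_state \<eta> \<beta>1 \<beta>2 lam \<nu> gr w0 t)"

end

theory Submission
  imports Defs
begin

lemma grad_bound:
  fixes F :: "real^'d \<Rightarrow> real" and u w :: "real^'d"
  assumes d: "(F has_derivative (\<lambda>h. u \<bullet> h)) (at w)"
    and lip: "\<And>w1 w2. \<bar>F w1 - F w2\<bar> \<le> G * norm (w1 - w2)"
  shows "norm u \<le> G"
proof -
  have "(1::real^'d) \<noteq> 0" by (simp add: vec_eq_iff)
  then have np: "norm (1::real^'d) > 0" by simp
  have "\<bar>F w - F (w + 1)\<bar> \<le> G * norm (w - (w + 1))"
    by (rule lip)
  then have "0 \<le> G * norm (1::real^'d)" by simp
  then have G0: "0 \<le> G" using np by (simp add: zero_le_mult_iff)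
  show ?thesis
proof (cases "u = 0")
  case True
  then show ?thesis using G0 by simp
next
  case False
  define g where "g = (\<lambda>s::real. F (w + s *\<^sub>R u))"
  have "((\<lambda>s::real. w + s *\<^sub>R u) has_derivative (\<lambda>s. s *\<^sub>R u)) (at 0)"
    by (auto intro!: derivative_eq_intros)
  from has_derivative_compose[OF this, of F "\<lambda>h. u \<bullet> h"] d
  have "(g has_derivative (\<lambda>s. u \<bullet> (s *\<^sub>R u))) (at 0)"
    unfolding g_def by (simp add: o_def)
  then have "(g has_real_derivative (u \<bullet> u)) (at 0)"
    by (simp add: has_field_derivative_def mult.commute[of _ "u \<bullet> u"])
  then have lim: "((\<lambda>h. (g (0 + h) - g 0) / h) \<longlongrightarrow> u \<bullet> u) (at 0)"
    by (simp add: DERIV_def)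
  have "eventually (\<lambda>h. (g (0 + h) - g 0) / h \<le> G * norm u) (at (0::real))"
  proof (rule always_eventually, intro allI)
    fix h :: real
    have "\<bar>g h - g 0\<bar> \<le> G * norm (h *\<^sub>R u)"
      using lip[of "w + h *\<^sub>R u" w] by (simp add: g_def)
    then have hh: "\<bar>g h - g 0\<bar> \<le> G * norm u * \<bar>h\<bar>" by (simp add: mult_ac)
    show "(g (0 + h) - g 0) / h \<le> G * norm u"
    proof (cases "h = 0")
      case True then show ?thesis using G0 by simp
    next
      case False
      have "(g (0 + h) - g 0) / h \<le> \<bar>(g h - g 0) / h\<bar>" by (simp only: add_0_left abs_ge_self)
      also have "\<dots> = \<bar>g h - g 0\<bar> / \<bar>h\<bar>" by (simp add: abs_divide)
      also have "\<dots> \<le> G * norm u"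
        using False \<open>\<bar>g h - g 0\<bar> \<le> G * norm u * \<bar>h\<bar>\<close> by (simp add: pos_divide_le_eq)
      finally show ?thesis .
    qed
  qed
  from tendsto_le[OF trivial_limit_at tendsto_const lim this]
  have "u \<bullet> u \<le> G * norm u" .
  then have "norm u * norm u \<le> G * norm u" by (simp add: dot_square_norm power2_eq_square)
  then show ?thesis using False by simp
qed
qed

lemma sign_vec_norm: "norm (sign_vec (c::real^'d)) \<le> sqrt (real CARD('d))"
proof -
  have "norm (sign_vec c) \<le> norm (1::real^'d)"
    by (rule norm_le_componentwise_cart) (simp add: sign_vec_def sgn_if)
  also have "norm (1::real^'d) = sqrt (real CARD('d))"
    by (simp add: norm_vec_def L2_set_def)
  finally show ?thesis .
qed

lemma clion_dir_norm:
  assumes "norm c \<le> G"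
  shows "norm (clion_dir \<nu> (c::real^'d)) \<le> max G (sqrt (real CARD('d)))"
  using assms sign_vec_norm[of c] unfolding clion_dir_def by auto

lemma clion_w_Suc:
  "clion_w \<eta> \<beta>1 \<beta>2 lam \<nu> gr w0 (Suc t) =
    clion_w \<eta> \<beta>1 \<beta>2 lam \<nu> gr w0 t - \<eta> *\<^sub>R (clion_dir \<nu>
      (\<beta>1 *\<^sub>R snd (clion_state \<eta> \<beta>1 \<beta>2 lam \<nu> gr w0 t) + (1 - \<beta>1) *\<^sub>R gr (Suc t) (clion_w \<eta> \<beta>1 \<beta>2 lam \<nu> gr w0 t))
      + lam *\<^sub>R clion_w \<eta> \<beta>1 \<beta>2 lam \<nu> gr w0 t)"
  by (simp add: clion_w_def case_prod_beta Let_def)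

lemma clion_m_bound:
  assumes g: "\<And>s w. norm (gr s w) \<le> G" and G: "0 \<le> G" and b: "0 \<le> \<beta>2" "\<beta>2 \<le> 1"
  shows "norm (snd (clion_state \<eta> \<beta>1 \<beta>2 lam \<nu> gr w0 t)) \<le> G"
proof (induction t)
  case 0
  then show ?case using G by simp
next
  case (Suc t)
  let ?m = "snd (clion_state \<eta> \<beta>1 \<beta>2 lam \<nu> gr w0 t)"
  let ?g = "gr (Suc t) (fst (clion_state \<eta> \<beta>1 \<beta>2 lam \<nu> gr w0 t))"
  have "snd (clion_state \<eta> \<beta>1 \<beta>2 lam \<nu> gr w0 (Suc t)) = \<beta>2 *\<^sub>R ?m + (1 - \<beta>2) *\<^sub>R ?g"
    by (simp add: case_prod_beta Let_def)
  also have "norm \<dots> \<le> \<beta>2 * norm ?m + (1 - \<beta>2) * norm ?g"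
    using b by (smt (verit) norm_scaleR norm_triangle_ineq)
  also have "\<dots> \<le> \<beta>2 * G + (1 - \<beta>2) * G"
    using b Suc g by (intro add_mono mult_left_mono) auto
  also have "\<dots> = G" by (simp add: algebra_simps)
  finally show ?case .
qed

theorem lemma3:
  fixes f :: "'x \<Rightarrow> real^'d \<Rightarrow> real"
    and grad :: "'x \<Rightarrow> real^'d \<Rightarrow> real^'d"
    and \<xi> :: "nat \<Rightarrow> 'x"
    and w0 :: "real^'d"
    and \<eta> \<beta>1 \<beta>2 lam \<nu> G \<alpha> :: real
    and T :: nat
  assumes grad: "\<And>z w. (f z has_derivative (\<lambda>h. grad z w \<bullet> h)) (at w)"
    and lip: "\<And>z w1 w2. \<bar>f z w1 - f z w2\<bar> \<le> G * norm (w1 - w2)"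
    and eta: "\<eta> > 0"
    and b1: "0 < \<beta>1" "\<beta>1 < 1"
    and b2: "0 < \<beta>2" "\<beta>2 < 1"
    and lam: "lam > 0"
    and nu: "\<nu> > 0"
    and alpha: "\<alpha> > 1"
    and w0: "norm w0 \<le> \<eta> * max G (sqrt (real CARD('d)))"
    and lam_le: "lam \<le> 1 / (2 * \<eta> * max G (sqrt (real CARD('d))) * real T powr \<alpha>)"
  shows "\<forall>t\<le>T.
           norm (clion_w \<eta> \<beta>1 \<beta>2 lam \<nu> (\<lambda>s w. grad (\<xi> s) w) w0 t)
             \<le> (real t + 1) * \<eta> * max G (sqrt (real CARD('d)))
         \<and> (1 \<le> t \<longrightarrow>
           norm (clion_w \<eta> \<beta>1 \<beta>2 lam \<nu> (\<lambda>s w. grad (\<xi> s) w) w0 t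
                 - clion_w \<eta> \<beta>1 \<beta>2 lam \<nu> (\<lambda>s w. grad (\<xi> s) w) w0 (t - 1))
             \<le> 2 * \<eta> * max G (sqrt (real CARD('d))))"
proof -
  define H where "H = max G (sqrt (real CARD('d)))"
  define gr where "gr = (\<lambda>s w. grad (\<xi> s) w)"
  define W where "W = clion_w \<eta> \<beta>1 \<beta>2 lam \<nu> gr w0"
  have gb: "\<And>s w. norm (gr s w) \<le> G"
    unfolding gr_def by (rule grad_bound[OF grad lip])
  have G0: "0 \<le> G" by (rule order_trans[OF norm_ge_zero gb[of 0 w0]])
  have H1: "1 \<le> H" unfolding H_def by (simp add: le_max_iff_disj)
  have T1: "1 \<le> T"
  proof (rule ccontr)
    assume "\<not> 1 \<le> T" then have "T = 0" by simp
    then show False using lam lam_le by simp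
  qed
  have Tp: "real T \<le> real T powr \<alpha>"
    using T1 alpha by (metis less_imp_le of_nat_0_less_iff of_nat_1 of_nat_le_iff powr_mono powr_one_eq_one powr_one_gt_zero_iff order_less_le_trans zero_less_one)
  have lamT: "\<eta> * lam * real T \<le> 1 / (2 * H)"
  proof -
    have "\<eta> * lam \<le> \<eta> * (1 / (2 * \<eta> * H * real T powr \<alpha>))"
      using lam_le eta unfolding H_def by (intro mult_left_mono) auto
    also have "\<dots> = 1 / (2 * H * real T powr \<alpha>)" using eta by simp
    finally have e1: "\<eta> * lam \<le> 1 / (2 * H * real T powr \<alpha>)" .
    have Tpos: "0 < real T powr \<alpha>" using T1 by simp
    have "\<eta> * lam * real T \<le> 1 / (2 * H * real T powr \<alpha>) * real T"
      using e1 by (intro mult_right_mono) auto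
    also have "\<dots> = (real T / real T powr \<alpha>) / (2 * H)" by simp
    also have "\<dots> \<le> 1 / (2 * H)"
      using Tp Tpos H1 by (intro divide_right_mono) (auto simp: divide_le_eq)
    finally show ?thesis .
  qed
  have dirb: "\<And>t. norm (clion_dir \<nu> (\<beta>1 *\<^sub>R snd (clion_state \<eta> \<beta>1 \<beta>2 lam \<nu> gr w0 t) + (1 - \<beta>1) *\<^sub>R gr (Suc t) (W t))) \<le> H"
  proof -
    fix t
    let ?m = "snd (clion_state \<eta> \<beta>1 \<beta>2 lam \<nu> gr w0 t)"
    have "norm (\<beta>1 *\<^sub>R ?m + (1 - \<beta>1) *\<^sub>R gr (Suc t) (W t)) \<le> \<beta>1 * norm ?m + (1 - \<beta>1) * norm (gr (Suc t) (W t))"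
      using b1 by (smt (verit) norm_scaleR norm_triangle_ineq)
    also have "\<dots> \<le> \<beta>1 * G + (1 - \<beta>1) * G"
      using b1 b2 gb clion_m_bound[OF gb G0, of \<beta>2] by (intro add_mono mult_left_mono) auto
    also have "\<dots> = G" by (simp add: algebra_simps)
    finally show "?thesis t" unfolding H_def by (rule clion_dir_norm)
  qed
  have step: "\<And>t. norm (W (Suc t) - W t) \<le> \<eta> * H + \<eta> * lam * norm (W t)"
  proof -
    fix t
    have "W (Suc t) - W t = - ((\<eta> *\<^sub>R (clion_dir \<nu> (\<beta>1 *\<^sub>R snd (clion_state \<eta> \<beta>1 \<beta>2 lam \<nu> gr w0 t) + (1 - \<beta>1) *\<^sub>R gr (Suc t) (W t)) + lam *\<^sub>R W t)))"
      unfolding W_def by (simp add: clion_w_Suc)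
    then have "norm (W (Suc t) - W t) = \<eta> * norm (clion_dir \<nu> (\<beta>1 *\<^sub>R snd (clion_state \<eta> \<beta>1 \<beta>2 lam \<nu> gr w0 t) + (1 - \<beta>1) *\<^sub>R gr (Suc t) (W t)) + lam *\<^sub>R W t)"
      using eta by simp
    also have "\<dots> \<le> \<eta> * (norm (clion_dir \<nu> (\<beta>1 *\<^sub>R snd (clion_state \<eta> \<beta>1 \<beta>2 lam \<nu> gr w0 t) + (1 - \<beta>1) *\<^sub>R gr (Suc t) (W t))) + norm (lam *\<^sub>R W t))"
      using eta by (intro mult_left_mono norm_triangle_ineq) auto
    also have "\<dots> \<le> \<eta> * (H + lam * norm (W t))"
      using eta lam dirb[of t] by (intro mult_left_mono add_mono) auto
    finally show "?thesis t" by (simp add: algebra_simps)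
  qed
  have bnd: "\<And>t. t \<le> T \<Longrightarrow> norm (W t) \<le> (real t + 1) * \<eta> * H"
  proof -
    fix t show "t \<le> T \<Longrightarrow> norm (W t) \<le> (real t + 1) * \<eta> * H"
    proof (induction t)
      case 0 then show ?case using w0 unfolding W_def H_def clion_w_def by simp
    next
      case (Suc t)
      then have IH: "norm (W t) \<le> (real t + 1) * \<eta> * H" by simp
      have tT: "real t + 1 \<le> real T" using Suc.prems by simp
      have "W (Suc t) = (1 - \<eta> * lam) *\<^sub>R W t - \<eta> *\<^sub>R (clion_dir \<nu> (\<beta>1 *\<^sub>R snd (clion_state \<eta> \<beta>1 \<beta>2 lam \<nu> gr w0 t) + (1 - \<beta>1) *\<^sub>R gr (Suc t) (W t)))"
        unfolding W_def by (simp add: clion_w_Suc algebra_simps)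
      have el: "\<eta> * lam \<le> 1"
      proof -
        have "\<eta> * lam * 1 \<le> \<eta> * lam * real T" using T1 eta lam by (intro mult_left_mono) auto
        also have "\<dots> \<le> 1 / (2 * H)" by (rule lamT)
        also have "\<dots> \<le> 1" using H1 by simp
        finally show ?thesis by simp
      qed
      have "norm (W (Suc t)) \<le> (1 - \<eta> * lam) * norm (W t) + \<eta> * H"
      proof -
        have "norm (W (Suc t)) \<le> norm ((1 - \<eta> * lam) *\<^sub>R W t) + norm (\<eta> *\<^sub>R (clion_dir \<nu> (\<beta>1 *\<^sub>R snd (clion_state \<eta> \<beta>1 \<beta>2 lam \<nu> gr w0 t) + (1 - \<beta>1) *\<^sub>R gr (Suc t) (W t))))"
          unfolding \<open>W (Suc t) = _\<close> by (rule norm_triangle_ineq4)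
        also have "\<dots> \<le> (1 - \<eta> * lam) * norm (W t) + \<eta> * H"
          using el eta dirb[of t] by (simp add: mult_left_mono)
        finally show ?thesis .
      qed
      also have "\<dots> \<le> norm (W t) + \<eta> * H"
        using eta lam by (simp add: algebra_simps)
      also have "\<dots> \<le> (real (Suc t) + 1) * \<eta> * H" using IH by (simp add: algebra_simps)
      finally show ?case .
    qed
  qed
  show ?thesis
    unfolding H_def[symmetric] gr_def[symmetric] W_def[symmetric]
  proof (intro allI impI conjI)
    fix t assume tT: "t \<le> T"
    show "norm (W t) \<le> (real t + 1) * \<eta> * H" using bnd tT .
    assume t1: "1 \<le> t"
    then obtain s where s: "t = Suc s" by (cases t) auto
    have sb0: "norm (W s) \<le> (real s + 1) * \<eta> * H" using bnd[of s] tT s by simp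
    have sb: "norm (W s) \<le> real t * \<eta> * H" using sb0 s by (simp add: add.commute)
    have el0: "0 \<le> \<eta> * lam" using eta lam by simp
    have eH: "0 \<le> \<eta> * H" using eta H1 by simp
    have "\<eta> * lam * norm (W s) \<le> \<eta> * lam * (real t * \<eta> * H)"
      using sb el0 by (rule mult_left_mono)
    also have "\<dots> = (\<eta> * lam * real t) * (\<eta> * H)" by (simp only: mult_ac)
    also have "\<dots> \<le> (\<eta> * lam * real T) * (\<eta> * H)"
      using el0 eH tT by (intro mult_right_mono mult_left_mono) simp_all
    also have "\<dots> \<le> 1 / (2 * H) * (\<eta> * H)"
      using lamT eH by (rule mult_right_mono)
    also have "\<dots> \<le> \<eta> * H" using eta H1 by (simp add: field_simps)
    finally have "\<eta> * lam * norm (W s) \<le> \<eta> * H" .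
    then show "norm (W t - W (t - 1)) \<le> 2 * \<eta> * H" using step[of s] s by simp
  qed
qed

end
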